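(* There is an absolute constant $C_1$ such that for all $p\in(0,0.1)$, with $q=-\log(1-p)$, $A=\lceil 1/\sqrt q\rceil$, $B=\lfloor q^{-1}\log q^{-1}\rfloor$, $$\int_{Aq}^{Bq} g(z)\,dz\ge \frac{\pi^2}{18}-C_1\sqrt q\,\log q^{-1}.$$
   Context: $\beta(u)=\frac{u+\sqrt{u(4-3u)}}{2}$ and $g(z)=-\log\beta(1-e^{-z})$ for $z>0$. *)

theory Defs
  imports "HOL-Analysis.Analysis"
begin

definition beta :: "real \<Rightarrow> real" where
  "beta u = (u + sqrt (u * (4 - 3 * u))) / 2"

definition g :: "real \<Rightarrow> real" where
  "g z = - ln (beta (1 - exp (- z)))"

end

theory Submission
  imports Defs "HOL-Real_Asymp.Real_Asymp"
begin


definition li2 :: "real \<Rightarrow> real" where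
  "li2 x = (\<Sum>n. (1 / (real n)^2) * x ^ n)"

lemma li2_summ: "summable (\<lambda>n. 1 / (real n)^2 :: real)"
proof -
  have "summable (\<lambda>n. 1 / (real (Suc n))^2 :: real)"
    using inverse_squares_sums by (simp add: sums_summable add.commute)
  then show ?thesis by (subst summable_Suc_iff[symmetric])
qed

lemma li2_cont: "continuous_on {-1..1} li2"
proof -
  have u: "uniform_limit {-1..1} (\<lambda>n x. \<Sum>i<n. (1 / (real i)^2) * x ^ i) (\<lambda>x. \<Sum>i. (1 / (real i)^2) * x ^ i) sequentially"
  proof (rule Weierstrass_m_test[OF _ li2_summ])
    fix n and x :: real assume "x \<in> {-1..1}"
    then have "\<bar>x\<bar> ^ n \<le> 1" by (intro power_le_one) auto
    then show "norm ((1 / (real n)^2) * x ^ n) \<le> 1 / (real n)^2"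
      by (simp add: abs_mult power_abs divide_le_eq mult_le_cancel_left1)
  qed
  show ?thesis unfolding li2_def
    apply (rule uniform_limit_theorem[OF _ u])
     apply (rule always_eventually)
     apply (intro allI continuous_intros)
    apply simp
    done
qed

lemma li2_1: "li2 1 = pi^2/6"
proof -
  have "(\<lambda>n. 1 / (real (Suc n))^2) sums (pi^2/6)"
    using inverse_squares_sums by (simp add: add.commute)
  then have "(\<lambda>n. 1 / (real n)^2) sums (pi^2/6)"
    by (subst (asm) sums_Suc_iff) simp
  then show ?thesis unfolding li2_def by (simp add: sums_iff)
qed

lemma li2_m1: "li2 (-1) = -(pi^2/12)"
proof -
  have s1: "(\<lambda>n. 1 / (real n)^2) sums (pi^2/6)"
  proof -
    have "(\<Sum>n. 1/(real n)^2) = pi^2/6" using li2_1 by (simp add: li2_def)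
    then show ?thesis using summable_sums[OF li2_summ] by metis
  qed
  have "(\<lambda>n. 1 / (real (2*n))^2) sums (pi^2/24)"
    using sums_mult[OF s1, of "1/4"] by (simp add: power_mult_distrib)
  then have "(\<lambda>n. 2 * (1 / (real (2*n))^2)) sums (pi^2/12)"
    using sums_mult[of _ _ 2] by fastforce
  moreover have "(\<lambda>n. 2 * (1 / (real (2*n))^2)) = (\<lambda>n. (\<lambda>k. (1 / (real k)^2) * (1 + (-1)^k)) (2*n))"
    by auto
  ultimately have h: "(\<lambda>n. (\<lambda>k. (1 / (real k)^2) * (1 + (-1)^k)) (2*n)) sums (pi^2/12)"
    by simp
  have z: "\<And>k. k \<notin> range (\<lambda>n. 2*n) \<Longrightarrow> (1 / (real k)^2) * (1 + (-1)^k) = (0::real)"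
  proof -
    fix k :: nat assume "k \<notin> range (\<lambda>n. 2*n)"
    then have "odd k" by (metis evenE rangeI)
    then show "(1 / (real k)^2) * (1 + (-1)^k) = (0::real)" by simp
  qed
  have sm: "strict_mono (\<lambda>n::nat. 2*n)" by (simp add: strict_mono_def)
  have "(\<lambda>k. (1 / (real k)^2) * (1 + (-1)^k)) sums (pi^2/12)"
    using sums_mono_reindex[of "\<lambda>n. 2*n" "\<lambda>k. (1 / (real k)^2) * (1 + (-1)^k)", OF sm z] h by blast
  then have "(\<lambda>k. (1 / (real k)^2) * (1 + (-1)^k) - 1 / (real k)^2) sums (pi^2/12 - pi^2/6)"
    using s1 sums_diff by blast
  moreover have "(\<lambda>k. (1 / (real k)^2) * (1 + (-1)^k) - 1 / (real k)^2) = (\<lambda>k. (1 / (real k)^2) * (-1)^k)"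
    by (rule ext) (simp add: diff_divide_distrib[symmetric] add_divide_distrib)
  ultimately have "(\<lambda>k. (1 / (real k)^2) * (-1)^k) sums (-(pi^2/12))"
    by simp
  then show ?thesis unfolding li2_def by (simp add: sums_iff)
qed

lemma li2_deriv:
  assumes "\<bar>x\<bar> < 1" "x \<noteq> 0"
  shows "(li2 has_real_derivative (- ln (1 - x) / x)) (at x)"
proof -
  have d: "(li2 has_real_derivative (\<Sum>n. diffs (\<lambda>n. 1 / (real n)^2) n * x ^ n)) (at x)"
    unfolding li2_def
    by (rule termdiffs_strong[where K=1]) (use li2_summ assms in auto)
  have "ln (1 - x) = (\<Sum>n. (-1)^n * (1 / real (n + 1)) * ((1-x) - 1)^(Suc n))"
    by (rule ln_series) (use assms in auto)
  also have "\<dots> = (\<Sum>n. - (x * (x^n / real (Suc n))))"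
    by (rule suminf_cong) (simp add: power_minus' algebra_simps)
  finally have e1: "ln (1 - x) = (\<Sum>n. - (x * (x^n / real (Suc n))))" .
  have sm: "summable (\<lambda>n. x^n / real (Suc n))"
  proof (rule summable_comparison_test[where g="\<lambda>n. \<bar>x\<bar>^n"])
    show "\<exists>N. \<forall>n\<ge>N. norm (x ^ n / real (Suc n)) \<le> \<bar>x\<bar> ^ n"
      by (auto simp: abs_mult power_abs divide_le_eq intro!: mult_le_cancel_left1[THEN iffD2])
    show "summable (\<lambda>n. \<bar>x\<bar> ^ n)" using assms by (simp add: summable_geometric)
  qed
  have e2: "ln (1 - x) = - x * (\<Sum>n. x^n / real (Suc n))"
    unfolding e1 using suminf_minus[OF summable_mult[OF sm, of x]] suminf_mult[OF sm, of x]
    by simp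
  have e3: "(\<Sum>n. diffs (\<lambda>n. 1 / (real n)^2) n * x ^ n) = (\<Sum>n. x^n / real (Suc n))"
    by (rule suminf_cong) (simp add: diffs_def power2_eq_square)
  show ?thesis using d e2 e3 assms by simp
qed



definition L :: "real \<Rightarrow> real" where "L s = ln (1 - s + s^2)"
definition Phi :: "real \<Rightarrow> real" where "Phi s = li2 (-s) - li2 (-(s^3)) / 3"
definition P :: "real \<Rightarrow> real" where
  "P s = (L s)^2/2 - L s * ln s + ln s * ln (1-s) + Phi s - Phi (1-s) + li2 s"
definition Zf :: "real \<Rightarrow> real" where "Zf s = L s - ln (1 - s)"
definition Zd :: "real \<Rightarrow> real" where "Zd s = s*(2-s)/((1-s+s^2)*(1-s))"
definition G :: "real \<Rightarrow> real" where "G s = L s - ln s"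

lemma quad_pos: "1 - s + s^2 > (0::real)"
proof -
  have h: "1 - s + s^2 = (s - 1/2)^2 + 3/4" by (simp add: power2_eq_square algebra_simps)
  show ?thesis unfolding h using zero_le_power2[of "s - 1/2"] by linarith
qed

lemma L_sym: "L (1 - s) = L s"
  unfolding L_def by (simp add: algebra_simps power2_eq_square)

lemma L_alt: assumes "s > -1" shows "L s = ln (1 + s^3) - ln (1 + s)"
proof -
  have "1 + s^3 = (1+s) * (1 - s + s^2)" by (simp add: algebra_simps power2_eq_square power3_eq_cube)
  then have "ln (1 + s^3) = ln (1+s) + ln (1 - s + s^2)"
    using assms quad_pos[of s] by (simp add: ln_mult)
  then show ?thesis unfolding L_def by simp
qed

lemma L_deriv: "(L has_real_derivative (2* s-1)/(1-s+s^2)) (at s)"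
  unfolding L_def using quad_pos[of s]
  by (auto intro!: derivative_eq_intros simp: power2_eq_square)

lemma Phi_deriv: assumes "0 < s" "s < 1" shows "(Phi has_real_derivative (L s / s)) (at s)"
proof -
  have s3: "0 < s^3" "s^3 < 1" using assms by (auto simp: power_less_one_iff)
  have d1: "((\<lambda>x. li2 (-x)) has_real_derivative (- ln (1 - (-s)) / (-s)) * (-1)) (at s)"
    by (rule DERIV_chain2[OF li2_deriv]) (use assms in \<open>auto intro!: derivative_eq_intros\<close>)
  have d2: "((\<lambda>x. li2 (-(x^3))) has_real_derivative (- ln (1 - (-(s^3))) / (-(s^3))) * (-(3* s^2))) (at s)"
    by (rule DERIV_chain2[OF li2_deriv]) (use assms s3 in \<open>auto intro!: derivative_eq_intros\<close>)
  have d: "(Phi has_real_derivative ((- ln (1 - (-s)) / (-s)) * (-1) - (- ln (1 - (-(s^3))) / (-(s^3))) * (-(3* s^2)) / 3)) (at s)"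
    unfolding Phi_def by (intro DERIV_diff d1 DERIV_cdivide d2)
  have "(- ln (1 - (-s)) / (-s)) * (-1) - (- ln (1 - (-(s^3))) / (-(s^3))) * (-(3* s^2)) / 3
        = (ln (1 + s^3) - ln (1 + s)) / s"
    using assms by (simp add: field_simps power2_eq_square power3_eq_cube)
  also have "\<dots> = L s / s" using L_alt[of s] assms by simp
  finally show ?thesis using d by simp
qed

lemma L_deriv': "(f has_real_derivative f') (at x) \<Longrightarrow> D = (2 * f x - 1)/(1 - f x + (f x)^2) * f' \<Longrightarrow>
   ((\<lambda>x. L (f x)) has_real_derivative D) (at x)"
  using DERIV_chain2[OF L_deriv] by blast

lemma Phi_deriv': "(f has_real_derivative f') (at x) \<Longrightarrow> 0 < f x \<Longrightarrow> f x < 1 \<Longrightarrow> D = L (f x) / f x * f' \<Longrightarrow>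
   ((\<lambda>x. Phi (f x)) has_real_derivative D) (at x)"
  using DERIV_chain2[OF Phi_deriv] by blast

lemma alg:
  fixes s d l a b :: real
  assumes "s>0" "s<1" "d = 1-s+s^2" "d>0"
  shows "l*((2 * s-1)/d) - ((2 * s-1)/d*a + l*(1/s)) + ((1/s)*b + a*(-1/(1-s))) + l/s - (l/(1-s))*(-1) + (-b/s)
     = (l - a)*(s*(2-s)/(d*(1-s)))"
proof -
  have e1: "l*((2 * s-1)/d) - ((2 * s-1)/d*a + l*(1/s)) + ((1/s)*b + a*(-1/(1-s))) + l/s - (l/(1-s))*(-1) + (-b/s)
     = (l - a) * ((2 * s-1)/d + 1/(1-s))"
  proof -
    have "s \<noteq> 0" "1 - s \<noteq> 0" "d \<noteq> 0" using assms by auto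
    then show ?thesis unfolding divide_inverse by algebra
  qed
  have e2: "(2 * s-1)/d + 1/(1-s) = s*(2-s)/(d*(1-s))"
  proof -
    have "1 - s \<noteq> 0" "d \<noteq> 0" using assms by auto
    then have "(2 * s-1)/d + 1/(1-s) = ((2 * s-1)*(1-s) + d)/(d*(1-s))" by (simp add: field_simps)
    also have "(2 * s-1)*(1-s) + d = s*(2-s)" using assms(3) by (simp add: algebra_simps power2_eq_square)
    finally show ?thesis .
  qed
  show ?thesis using e1 e2 by simp
qed

lemma P_deriv: assumes "0 < s" "s < 1" shows "(P has_real_derivative (G s * Zd s)) (at s)"
proof -
  have q: "1 - s + s^2 > 0" by (rule quad_pos)
  have q2: "s^2 + 1 - s > 0" using q by simp
  have li: "(li2 has_real_derivative (- ln (1 - s) / s)) (at s)"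
    by (rule li2_deriv) (use assms in auto)
  have t1: "((\<lambda>x. (L x)^2/2) has_real_derivative (L s * ((2 * s-1)/(1-s+s^2)))) (at s)"
    using DERIV_cdivide[OF DERIV_chain2[OF DERIV_pow[of 2] L_deriv[of s]], of 2]
    by (rule DERIV_cong) (use q in \<open>simp add: field_simps\<close>)
  have t2: "((\<lambda>x. L x * ln x) has_real_derivative ((2 * s-1)/(1-s+s^2) * ln s + L s * (1/s))) (at s)"
  proof -
    have "(ln has_real_derivative 1/s) (at s)" using assms by (intro DERIV_ln_divide)
    from DERIV_mult[OF L_deriv this] show ?thesis by (rule DERIV_cong) (simp add: algebra_simps)
  qed
  have t3: "((\<lambda>x. ln x * ln (1-x)) has_real_derivative ((1/s) * ln (1-s) + ln s * (-1/(1-s)))) (at s)"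
    using assms by (auto intro!: derivative_eq_intros)
  have t4: "(Phi has_real_derivative (L s / s)) (at s)" by (rule Phi_deriv) (use assms in auto)
  have t5: "((\<lambda>x. Phi (1 - x)) has_real_derivative (L (1-s) / (1-s)) * (-1)) (at s)"
    by (rule DERIV_chain2[OF Phi_deriv]) (use assms in \<open>auto intro!: derivative_eq_intros\<close>)
  have dP: "(P has_real_derivative
     (L s * ((2 * s-1)/(1-s+s^2)) - ((2 * s-1)/(1-s+s^2) * ln s + L s * (1/s))
      + ((1/s) * ln (1-s) + ln s * (-1/(1-s))) + L s / s - (L (1-s) / (1-s)) * (-1)
      + (- ln (1 - s) / s))) (at s)"
    unfolding P_def[abs_def]
    by (intro DERIV_add DERIV_diff t1 t2 t3 t4 t5 li)
  have "L s * ((2 * s-1)/(1-s+s^2)) - ((2 * s-1)/(1-s+s^2) * ln s + L s * (1/s))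
      + ((1/s) * ln (1-s) + ln s * (-1/(1-s))) + L s / s - (L (1-s) / (1-s)) * (-1)
      + (- ln (1 - s) / s) = G s * Zd s"
    unfolding L_sym G_def Zd_def using assms q by (intro alg) auto
  then show ?thesis using dP by simp
qed



lemma g_Zf: assumes "0 < s" "s < 1" shows "g (Zf s) = G s"
proof -
  define d where "d = 1 - s + s^2"
  have d: "d > 0" unfolding d_def by (rule quad_pos)
  have z: "Zf s = ln (d / (1 - s))" unfolding Zf_def L_def d_def using assms quad_pos[of s]
    by (simp add: ln_div)
  have e: "exp (- Zf s) = (1 - s) / d" unfolding z using d assms
    by (simp add: exp_minus exp_ln)
  have u: "1 - exp (- Zf s) = s^2 / d" unfolding e using d
    by (simp add: field_simps d_def)
  have "s^2 / d * (4 - 3 * (s^2 / d)) = (s^2 * (4 * d - 3 * s^2)) / d^2"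
    using d by (simp add: field_simps power2_eq_square)
  also have "4 * d - 3 * s^2 = (2 - s)^2" unfolding d_def by (simp add: algebra_simps power2_eq_square)
  also have "s^2 * (2 - s)^2 / d^2 = (s * (2 - s) / d)^2" by (simp add: power_mult_distrib power_divide)
  finally have "s^2 / d * (4 - 3 * (s^2 / d)) = (s * (2 - s) / d)^2" .
  then have sq: "sqrt (s^2 / d * (4 - 3 * (s^2 / d))) = s * (2 - s) / d"
    using assms d by simp
  have b: "beta (1 - exp (- Zf s)) = s / d"
    unfolding beta_def u sq using d by (simp add: field_simps power2_eq_square)
  show ?thesis unfolding g_def b G_def L_def d_def[symmetric] using assms d
    by (simp add: ln_div)
qed

lemma Zf_alt: assumes "s < 1" shows "Zf s = ln (1 + s^2 / (1 - s))"
proof -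
  have "1 + s^2 / (1 - s) = (1 - s + s^2) / (1 - s)" using assms by (simp add: field_simps)
  then show ?thesis unfolding Zf_def L_def using assms quad_pos[of s] by (simp add: ln_div)
qed

lemma Zf_mono: assumes "0 \<le> s" "s < t" "t < 1" shows "Zf s < Zf t"
proof -
  have "s^2 / (1 - s) < t^2 / (1 - t)"
  proof (rule le_less_trans[of _ "s^2/(1-t)"])
    show "s^2 / (1 - s) \<le> s^2 / (1 - t)" using assms by (intro divide_left_mono) auto
    show "s^2/(1-t) < t^2/(1-t)" using assms by (intro divide_strict_right_mono power_strict_mono) auto
  qed
  moreover have "0 \<le> s^2 / (1 - s)" using assms by auto
  moreover have "Zf s = ln (1 + s^2 / (1 - s))" "Zf t = ln (1 + t^2 / (1 - t))"
    using Zf_alt assms by auto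
  ultimately show ?thesis by simp
qed

lemma Zf_deriv: assumes "0 < s" "s < 1" shows "(Zf has_real_derivative Zd s) (at s)"
proof -
  have "(Zf has_real_derivative ((2 * s - 1)/(1-s+s^2) - (-1/(1-s)))) (at s)"
    unfolding Zf_def[abs_def] using assms
    by (intro DERIV_diff L_deriv) (auto intro!: derivative_eq_intros)
  moreover have "(2 * s - 1)/(1-s+s^2) - (-1/(1-s)) = Zd s"
  proof -
    have "1 - s \<noteq> 0" "1-s+s^2 \<noteq> 0" using assms quad_pos[of s] by auto
    then have "(2 * s-1)/(1-s+s^2) - (-1/(1-s)) = ((2 * s-1)*(1-s) + (1-s+s^2))/((1-s+s^2)*(1-s))"
      by (simp add: field_simps)
    also have "(2 * s-1)*(1-s) + (1-s+s^2) = s*(2-s)" by (simp add: algebra_simps power2_eq_square)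
    finally show ?thesis unfolding Zd_def .
  qed
  ultimately show ?thesis by simp
qed

lemma beta_pos: assumes "0 < u" "u \<le> 1" shows "beta u > 0"
proof -
  have "sqrt (u * (4 - 3 * u)) \<ge> 0" using assms by simp
  then show ?thesis unfolding beta_def using assms by (simp add: add_pos_nonneg)
qed

lemma g_cont: assumes "0 < c" shows "continuous_on {c..d} g"
proof -
  have "\<And>z. z \<in> {c..d} \<Longrightarrow> beta (1 - exp (-z)) \<noteq> 0"
  proof -
    fix z assume "z \<in> {c..d}"
    then have "z > 0" using assms by auto
    then have "0 < 1 - exp (-z)" "1 - exp (-z) \<le> 1" by auto
    then have "beta (1 - exp (-z)) > 0" by (rule beta_pos)
    then show "beta (1 - exp (-z)) \<noteq> 0" by simp
  qed
  moreover have "\<And>z. z \<in> {c..d} \<Longrightarrow> 0 \<le> (1 - exp (-z)) * (4 - 3 * (1 - exp (-z)))"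
  proof -
    fix z assume "z \<in> {c..d}"
    then have "z > 0" using assms by auto
    then have "0 < 1 - exp (-z)" "1 - exp (-z) \<le> 1" by auto
    then show "0 \<le> (1 - exp (-z)) * (4 - 3 * (1 - exp (-z)))" by (intro mult_nonneg_nonneg) auto
  qed
  ultimately show ?thesis unfolding g_def[abs_def] beta_def
    by (intro continuous_intros) auto
qed

lemma integral_eq:
  assumes "0 < s1" "s1 \<le> s2" "s2 < 1"
  shows "integral {Zf s1..Zf s2} g = P s2 - P s1"
proof -
  have m: "Zf s1 \<le> Zf s2" using Zf_mono[of s1 s2] assms by (cases "s1 = s2") auto
  have pos: "Zf s1 > 0" using Zf_mono[of 0 s1] assms by (simp add: Zf_def L_def)
  have sub: "((\<lambda>x. Zd x *\<^sub>R g (Zf x)) has_integral (integral {Zf s1..Zf s2} g)) {s1..s2}"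
  proof (rule has_integral_substitution[where f=g and g=Zf and g'=Zd and c="Zf s1" and d="Zf s2" and a=s1 and b=s2])
    show "Zf ` {s1..s2} \<subseteq> {Zf s1..Zf s2}"
    proof
      fix y assume "y \<in> Zf ` {s1..s2}"
      then obtain x where x: "x \<in> {s1..s2}" "y = Zf x" by auto
      have "Zf s1 \<le> Zf x" using Zf_mono[of s1 x] x assms by (cases "s1 = x") auto
      moreover have "Zf x \<le> Zf s2" using Zf_mono[of x s2] x assms by (cases "x = s2") auto
      ultimately show "y \<in> {Zf s1..Zf s2}" using x by auto
    qed
    show "continuous_on {Zf s1..Zf s2} g" using g_cont pos by blast
    fix x assume "x \<in> {s1..s2}"
    then show "(Zf has_real_derivative Zd x) (at x within {s1..s2})"
      using assms by (intro has_field_derivative_at_within[OF Zf_deriv]) auto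
  qed (use assms m in simp_all)
  have ftc: "((\<lambda>x. G x * Zd x) has_integral (P s2 - P s1)) {s1..s2}"
  proof (rule fundamental_theorem_of_calculus)
    show "s1 \<le> s2" by fact
    fix x assume "x \<in> {s1..s2}"
    then show "(P has_vector_derivative G x * Zd x) (at x within {s1..s2})"
    proof -
      have "(P has_real_derivative G x * Zd x) (at x)" using assms \<open>x \<in> {s1..s2}\<close> by (intro P_deriv) auto
      then show ?thesis by (simp add: has_real_derivative_iff_has_vector_derivative[symmetric] has_field_derivative_at_within)
    qed
  qed
  have "((\<lambda>x. Zd x *\<^sub>R g (Zf x)) has_integral (P s2 - P s1)) {s1..s2}"
  proof -
    have "\<And>x. x \<in> {s1..s2} \<Longrightarrow> G x * Zd x = Zd x *\<^sub>R g (Zf x)"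
    proof -
      fix x assume "x \<in> {s1..s2}"
      then have "g (Zf x) = G x" using assms by (intro g_Zf) auto
      then show "G x * Zd x = Zd x *\<^sub>R g (Zf x)" by simp
    qed
    then show ?thesis using has_integral_cong[of "{s1..s2}" "\<lambda>x. G x * Zd x" "\<lambda>x. Zd x *\<^sub>R g (Zf x)"] ftc by simp
  qed
  from has_integral_unique[OF sub this] show ?thesis .
qed



lemma cont_Lln: "continuous_on {0..1} (\<lambda>s. L s * ln s)"
proof (rule continuous_on_IccI)
  show "((\<lambda>s. L s * ln s) \<longlongrightarrow> L 0 * ln 0) (at_right 0)"
    unfolding L_def by simp real_asymp
  show "((\<lambda>s. L s * ln s) \<longlongrightarrow> L 1 * ln 1) (at_left 1)"
    unfolding L_def by simp real_asymp
  fix x :: real assume x: "0 < x" "x < 1"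
  have "isCont (\<lambda>s. L s * ln s) x" unfolding L_def using x quad_pos[of x]
    by (intro continuous_intros) auto
  then show "(\<lambda>s. L s * ln s) \<midarrow>x\<rightarrow> L x * ln x" by (simp add: isCont_def)
qed simp

lemma cont_lnln: "continuous_on {0..1} (\<lambda>s::real. ln s * ln (1 - s))"
proof (rule continuous_on_IccI)
  show "((\<lambda>s::real. ln s * ln (1 - s)) \<longlongrightarrow> ln 0 * ln (1 - 0)) (at_right 0)"
    by simp real_asymp
  show "((\<lambda>s::real. ln s * ln (1 - s)) \<longlongrightarrow> ln 1 * ln (1 - 1)) (at_left 1)"
    by simp real_asymp
  fix x :: real assume x: "0 < x" "x < 1"
  have "isCont (\<lambda>s. ln s * ln (1 - s)) x" using x
    by (intro continuous_intros) auto
  then show "(\<lambda>s. ln s * ln (1 - s)) \<midarrow>x\<rightarrow> ln x * ln (1 - x)" by (simp add: isCont_def)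
qed simp

lemma cont_L: "continuous_on S L"
  unfolding L_def[abs_def] apply (intro continuous_intros) using quad_pos by (metis order_less_irrefl)

lemma cont_li2_comp: "continuous_on S f \<Longrightarrow> f ` S \<subseteq> {-1..1} \<Longrightarrow> continuous_on S (\<lambda>x. li2 (f x))"
  by (rule continuous_on_compose2[OF li2_cont])

lemma cont_Phi: "continuous_on {0..1} Phi"
  unfolding Phi_def[abs_def]
  by (intro continuous_intros cont_li2_comp) (auto simp: power_le_one order_trans[OF _ zero_le_power])

lemma cont_Phi1: "continuous_on {0..1} (\<lambda>s. Phi (1 - s))"
  unfolding Phi_def[abs_def]
  by (intro continuous_intros cont_li2_comp) (auto simp: power_le_one order_trans[OF _ zero_le_power])

lemma cont_P: "continuous_on {0..1} P"
proof -
  have "continuous_on {0..1} li2" by (rule continuous_on_subset[OF li2_cont]) auto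
  moreover have "continuous_on {0..1} (\<lambda>s. (L s)^2/2)" by (intro continuous_intros cont_L) auto
  ultimately show ?thesis unfolding P_def[abs_def]
    by (intro continuous_on_add continuous_on_diff cont_Lln cont_lnln cont_Phi cont_Phi1)
qed

lemma li2_0: "li2 0 = 0"
proof -
  have "(\<lambda>n. (1 / (real n)^2) * (0::real) ^ n) = (\<lambda>n. 0)" by (rule ext) (simp add: power_0_left)
  then show ?thesis unfolding li2_def by simp
qed

lemma P_diff: "P 1 - P 0 = pi^2/18"
  unfolding P_def Phi_def L_def by (simp add: li2_1 li2_m1 li2_0)



lemma G_alt: assumes "0 < x" "x < 1" shows "G x = ln (1 + (1-x)^2/x)"
proof -
  have "1 + (1-x)^2/x = (1 - x + x^2)/x" using assms by (simp add: field_simps power2_eq_square)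
  then show ?thesis unfolding G_def L_def using assms quad_pos[of x] by (simp add: ln_div)
qed

lemma GZ_le5: assumes "0 < x" "x < 1" shows "G x * Zd x \<le> 5"
proof -
  have zd: "Zd x \<ge> 0" unfolding Zd_def using assms quad_pos[of x] by (auto intro!: divide_nonneg_pos)
  have "G x \<le> (1-x)^2/x" unfolding G_alt[OF assms]
    using ln_add_one_self_le_self[of "(1-x)^2/x"] assms by auto
  then have "G x * Zd x \<le> (1-x)^2/x * Zd x" using zd by (rule mult_right_mono)
  also have "\<dots> = (1-x)*(2-x)/(1-x+x^2)"
  proof -
    have gen: "y*y/x * (x*c/(d*y)) = y*c/d" if "x \<noteq> 0" "y \<noteq> 0" "d \<noteq> 0" for x y c d :: real
      using that by (simp add: field_simps)
    show ?thesis unfolding Zd_def power2_eq_square[of "1-x"]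
      by (rule gen) (use assms quad_pos[of x] in auto)
  qed
  also have "\<dots> \<le> 5"
  proof -
    have "x*x \<le> x*1" using assms by (intro mult_left_mono) auto
    then have "(1-x)*(2-x) \<le> 2" using assms by (simp add: algebra_simps)
    also have "2 \<le> 5 * (1 - x + x^2)" using quad_pos[of x] zero_le_power2[of "x - 1/2"]
      by (simp add: power2_eq_square algebra_simps)
    finally show ?thesis using quad_pos[of x] by (simp add: divide_le_eq)
  qed
  finally show ?thesis .
qed

lemma bound_top: assumes "0 < s" "s < 1" shows "P 1 - P s \<le> 5 * (1 - s)"
proof -
  have c: "continuous_on {s..1} P" by (rule continuous_on_subset[OF cont_P]) (use assms in auto)
  obtain l z where z: "s < z" "z < 1" "DERIV P z :> l" "P 1 - P s = (1 - s) * l"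
    using MVT[OF assms(2) c] assms P_deriv by (metis real_differentiable_def order_less_trans)
  have "l = G z * Zd z" using DERIV_unique[OF z(3) P_deriv] z assms by auto
  then have "l \<le> 5" using GZ_le5[of z] z assms by auto
  then have "(1-s)*l \<le> (1-s)*5" using assms by (intro mult_left_mono) auto
  then show ?thesis using z(4) by simp
qed

definition K :: "real \<Rightarrow> real" where "K s = 10 * (s^2/4 - s^2/2 * ln s)"

lemma cont_K: "continuous_on {0..1} K"
proof (rule continuous_on_IccI)
  show "(K \<longlongrightarrow> K 0) (at_right 0)" unfolding K_def[abs_def] by simp real_asymp
  show "(K \<longlongrightarrow> K 1) (at_left 1)" unfolding K_def[abs_def] by simp real_asymp
  fix x :: real assume x: "0 < x" "x < 1"
  have "isCont K x" unfolding K_def[abs_def] using x by (intro continuous_intros) auto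
  then show "K \<midarrow>x\<rightarrow> K x" by (simp add: isCont_def)
qed simp

lemma K_deriv: assumes "0 < x" shows "(K has_real_derivative (- 10 * x * ln x)) (at x)"
  unfolding K_def[abs_def] using assms
  by (auto intro!: derivative_eq_intros simp: field_simps power2_eq_square)

lemma GZ_le_small: assumes "0 < x" "x \<le> 0.7" shows "G x * Zd x \<le> - 10 * x * ln x"
proof -
  have x1: "x < 1" using assms by simp
  have zd: "Zd x \<ge> 0" unfolding Zd_def using assms quad_pos[of x] by (auto intro!: divide_nonneg_pos)
  have "x*x \<le> x*1" using assms by (intro mult_left_mono) auto
  then have "1 - x + x^2 \<le> 1" by (simp add: power2_eq_square)
  then have Lle: "L x \<le> 0" unfolding L_def using quad_pos[of x] by simp
  have lnx: "- ln x \<ge> 0" using assms by simp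
  have "G x * Zd x \<le> (- ln x) * Zd x" unfolding G_def using Lle zd by (intro mult_right_mono) auto
  also have "\<dots> \<le> (- ln x) * (10 * x)"
  proof (rule mult_left_mono[OF _ lnx])
    have d1: "(1-x+x^2)*(1-x) \<ge> 0.225"
    proof -
      have "1-x+x^2 \<ge> 3/4" using zero_le_power2[of "x - 1/2"] by (simp add: power2_eq_square algebra_simps)
      moreover have "1 - x \<ge> 0.3" using assms by simp
      ultimately have "(1-x+x^2)*(1-x) \<ge> (3/4)*0.3" by (intro mult_mono) auto
      then show ?thesis by simp
    qed
    have "Zd x = x*(2-x)/((1-x+x^2)*(1-x))" by (simp add: Zd_def)
    also have "\<dots> \<le> x * 2 / 0.225"
      using d1 assms by (intro frac_le mult_left_mono) auto
    also have "\<dots> \<le> 10 * x" using assms by simp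
    finally show "Zd x \<le> 10 * x" .
  qed
  finally show ?thesis by (simp add: algebra_simps)
qed

lemma bound_bot: assumes "0 < s" "s \<le> 0.7" shows "P s - P 0 \<le> K s"
proof -
  define R where "R x = P x - K x" for x
  have c: "continuous_on {0..s} R" unfolding R_def[abs_def]
    by (intro continuous_on_diff; rule continuous_on_subset[OF cont_P] continuous_on_subset[OF cont_K]) (use assms in auto)
  have dR: "(R has_real_derivative (G x * Zd x - (- 10 * x * ln x))) (at x)" if "0 < x" "x < s" for x
    unfolding R_def[abs_def] using that assms by (intro DERIV_diff P_deriv K_deriv) auto
  obtain l z where z: "0 < z" "z < s" "DERIV R z :> l" "R s - R 0 = (s - 0) * l"
    using MVT[OF assms(1) c] dR by (metis real_differentiable_def)
  have "l = G z * Zd z - (- 10 * z * ln z)" using DERIV_unique[OF z(3) dR] z by auto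
  then have "l \<le> 0" using GZ_le_small[of z] z assms by auto
  then have "R s - R 0 \<le> 0" using z(4) assms by (simp add: mult_nonneg_nonpos)
  moreover have "K 0 = 0" by (simp add: K_def)
  ultimately show ?thesis unfolding R_def by simp
qed



lemma ln_ge_1_minus_inv: "0 < x \<Longrightarrow> 1 - 1/x \<le> ln (x::real)"
  using ln_le_minus_one[of "1/x"] by (simp add: ln_div)

lemma exp_le_inv: "0 \<le> x \<Longrightarrow> x < 1 \<Longrightarrow> exp x \<le> 1 / (1 - (x::real))"
proof -
  assume x: "0 \<le> x" "x < 1"
  have "1 - x \<le> exp (-x)" using exp_ge_add_one_self[of "-x"] by simp
  then have "(1 - x) * exp x \<le> 1" by (simp add: exp_minus field_simps)
  then show ?thesis using x by (simp add: field_simps mult.commute)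
qed

lemma cont_Zf: assumes "t < 1" shows "continuous_on {0..t} Zf"
  unfolding Zf_def[abs_def]
  by (intro continuous_on_diff cont_L continuous_intros) (use assms in auto)

lemma main:
  fixes q :: real
  assumes q0: "0 < q" and q1: "q < 1/9"
  shows "integral {of_int \<lceil>1 / sqrt q\<rceil> * q .. of_int \<lfloor>(1 / q) * ln (1 / q)\<rfloor> * q} g
     \<ge> pi^2 / 18 - 40 * sqrt q * ln (1 / q)"
proof -
  define s where "s = sqrt q"
  define l where "l = ln (1/q)"
  define a where "a = of_int \<lceil>1 / sqrt q\<rceil> * q"
  define b where "b = of_int \<lfloor>(1 / q) * ln (1 / q)\<rfloor> * q"
  have s0: "0 < s" unfolding s_def using q0 by simp
  have qs: "q = s^2" unfolding s_def using q0 by simp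
  have s1: "s < 1/3"
  proof -
    have "sqrt q < sqrt (1/9)" using q1 by (simp only: real_sqrt_less_iff)
    moreover have "sqrt (1/9) = (1/3::real)" by (rule real_sqrt_unique) (auto simp: power2_eq_square)
    ultimately show ?thesis unfolding s_def by simp
  qed
  have l1: "l \<ge> 1"
  proof -
    have "q * exp 1 \<le> q * 3" using exp_le q0 by (intro mult_left_mono) auto
    then have "q * exp 1 \<le> 1" using q1 by linarith
    then have "exp 1 \<le> 1/q" using q0 by (simp add: field_simps)
    then show ?thesis unfolding l_def using q0 by (subst ln_ge_iff) auto
  qed
  have ls: "ln (1/s) = l/2" unfolding l_def s_def using q0 by (simp add: ln_div ln_sqrt)
  have A1: "of_int \<lceil>1 / sqrt q\<rceil> \<ge> 1/s" unfolding s_def by linarith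
  have A2: "of_int \<lceil>1 / sqrt q\<rceil> < 1/s + 1" unfolding s_def by linarith
  have aq: "a = of_int \<lceil>1 / sqrt q\<rceil> * s^2" unfolding a_def qs ..
  have a_lo: "a \<ge> s"
  proof -
    have "1/s * s^2 \<le> of_int \<lceil>1 / sqrt q\<rceil> * s^2" using A1 by (intro mult_right_mono) auto
    then show ?thesis unfolding aq using s0 by (simp add: power2_eq_square)
  qed
  have a_hi: "a \<le> 4/3 * s"
  proof -
    have "of_int \<lceil>1 / sqrt q\<rceil> * s^2 \<le> (1/s + 1) * s^2" using A2 by (intro mult_right_mono) auto
    also have "\<dots> = s + s * s" using s0 by (simp add: field_simps power2_eq_square)
    also have "\<dots> \<le> s + s * (1/3)" using s0 s1 by (intro add_left_mono mult_left_mono) auto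
    finally show ?thesis unfolding aq by simp
  qed
  have B1: "of_int \<lfloor>(1 / q) * ln (1 / q)\<rfloor> > (1/q) * l - 1" unfolding l_def by linarith
  have B2: "of_int \<lfloor>(1 / q) * ln (1 / q)\<rfloor> \<le> (1/q) * l" unfolding l_def by linarith
  have b_lo: "b > l - q"
  proof -
    have "((1/q) * l - 1) * q < of_int \<lfloor>(1 / q) * ln (1 / q)\<rfloor> * q" using B1 q0 by (intro mult_strict_right_mono) auto
    moreover have "((1/q) * l - 1) * q = l - q" using q0 by (simp add: field_simps)
    ultimately show ?thesis unfolding b_def by simp
  qed
  have b_hi: "b \<le> l"
  proof -
    have "of_int \<lfloor>(1 / q) * ln (1 / q)\<rfloor> * q \<le> ((1/q) * l) * q" using B2 q0 by (intro mult_right_mono) auto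
    then show ?thesis unfolding b_def using q0 by simp
  qed
  have a0: "a > 0" using a_lo s0 by simp
  have ab: "a < b" using a_hi s1 b_lo l1 q1 by simp
  have z07: "Zf 0.7 \<ge> 4/9"
  proof -
    have "Zf 0.7 = ln (79/30)" using Zf_alt[of "0.7"] by (simp add: power2_eq_square)
    also have "\<dots> \<ge> 1 - 1/(79/30)" by (rule ln_ge_1_minus_inv) simp
    finally show ?thesis by simp
  qed
  have "Zf 0 = 0" by (simp add: Zf_def L_def)
  then obtain sa where sa: "0 \<le> sa" "sa \<le> 0.7" "Zf sa = a"
    using IVT'[of Zf 0 a "0.7"] cont_Zf[of "0.7"] a0 a_hi s1 z07 by force
  have sa0: "sa > 0" using sa a0 \<open>Zf 0 = 0\<close> by (cases "sa = 0") auto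
  define t where "t = 1 - exp (-b) / 2"
  have b0: "b > 0" using a0 ab by simp
  have "exp (-b) < 1" using b0 by simp
  moreover have "exp (-b) > 0" by simp
  ultimately have t01: "0 < t" "t < 1" unfolding t_def by linarith+
  have zt: "Zf t \<ge> b"
  proof -
    have "ln (1 - t) = ln (exp (-b) / 2)" unfolding t_def by simp
    also have "\<dots> = - b - ln 2" by (subst ln_div) auto
    finally have "ln (1 - t) = - b - ln 2" .
    moreover have "L t \<ge> ln (3/4)"
    proof -
      have "1 - t + t^2 \<ge> 3/4" using zero_le_power2[of "t - 1/2"] by (simp add: power2_eq_square algebra_simps)
      then show ?thesis unfolding L_def by simp
    qed
    moreover have "ln (3/4) + ln 2 \<ge> (0::real)"
    proof -
      have "ln (3/4) + ln 2 = ln ((3/4) * (2::real))" by (subst ln_mult) auto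
      also have "\<dots> \<ge> 0" by simp
      finally show ?thesis .
    qed
    ultimately show ?thesis unfolding Zf_def by simp
  qed
  obtain sb where sb: "0 \<le> sb" "sb \<le> t" "Zf sb = b"
    using IVT'[of Zf 0 b t] cont_Zf[of t] t01 b0 zt \<open>Zf 0 = 0\<close> by force
  have sb01: "0 < sb" "sb < 1" using sb b0 t01 \<open>Zf 0 = 0\<close> by (cases "sb = 0"; auto)+
  have sasb: "sa \<le> sb"
  proof (rule ccontr)
    assume "\<not> sa \<le> sb"
    then have "Zf sb < Zf sa" using Zf_mono[of sb sa] sb01 sa by auto
    then show False using sa sb ab by simp
  qed
  have int: "integral {a..b} g = P sb - P sa"
    using integral_eq[of sa sb] sa0 sasb sb01 sa sb by simp
  have top: "P sb \<ge> P 1 - 6 * q"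
  proof -
    have "L sb \<le> 0"
    proof -
      have "sb* sb \<le> sb*1" using sb01 by (intro mult_left_mono) auto
      then have "1 - sb + sb^2 \<le> 1" by (simp add: power2_eq_square)
      then show ?thesis unfolding L_def using quad_pos[of sb] by simp
    qed
    then have "ln (1 - sb) \<le> - b" using sb unfolding Zf_def by simp
    then have "exp (ln (1 - sb)) \<le> exp (-b)" by simp
    then have "1 - sb \<le> exp (-b)" using sb01 by simp
    also have "exp (-b) \<le> exp (q - l)" using b_lo by simp
    also have "exp (q - l) = exp q * q" unfolding l_def using q0 by (simp add: exp_add ln_div)
    also have "\<dots> \<le> (9/8) * q"
    proof -
      have "exp q \<le> 1/(1-q)" using q0 q1 by (intro exp_le_inv) auto
      also have "\<dots> \<le> 9/8" using q1 q0 by (simp add: field_simps)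
      finally show ?thesis using q0 by (intro mult_right_mono) auto
    qed
    finally have "1 - sb \<le> 9/8 * q" .
    then have "5 * (1 - sb) \<le> 5 * (9/8 * q)" by simp
    then have "5 * (1 - sb) \<le> 6 * q" using q0 by simp
    then show ?thesis using bound_top[OF sb01] by linarith
  qed
  have bot: "P sa \<le> P 0 + 27 * s * l"
  proof -
    have e: "sa^2 / (1 - sa) = exp a - 1"
    proof -
      have "ln (1 + sa^2/(1-sa)) = a" using Zf_alt[of sa] sa by simp
      moreover have "0 < 1 + sa^2/(1-sa)" using sa by (intro add_pos_nonneg) auto
      ultimately have "1 + sa^2/(1-sa) = exp a" using exp_ln by metis
      then show ?thesis by simp
    qed
    have sa_hi: "sa^2 \<le> 2 * a"
    proof -
      have "sa^2 \<le> sa^2 / (1 - sa)" using sa sa0 by (simp add: le_divide_eq)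
      also have "\<dots> = exp a - 1" by (rule e)
      also have "exp a - 1 \<le> 1/(1-a) - 1" using exp_le_inv[of a] a0 a_hi s1 by simp
      also have "\<dots> \<le> 2 * a" using a0 a_hi s1 by (simp add: field_simps)
      finally show ?thesis .
    qed
    have sa_lo: "sa^2 \<ge> (3/10) * a"
    proof -
      have "sa^2 = (exp a - 1) * (1 - sa)" using e sa by (simp add: field_simps)
      moreover have "exp a - 1 \<ge> a" using exp_ge_add_one_self[of a] by linarith
      moreover have "1 - sa \<ge> 3/10" using sa by simp
      ultimately have "a * (3/10) \<le> (exp a - 1) * (1 - sa)" using a0 by (intro mult_mono) auto
      then show ?thesis using \<open>sa^2 = (exp a - 1) * (1 - sa)\<close> by simp
    qed
    have lnsa: "- ln sa \<le> 7/6 + l/4"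
    proof -
      have "ln (sa^2) \<ge> ln ((3/10) * a)" using sa_lo a0 sa0 by (subst ln_le_cancel_iff) auto
      moreover have "ln ((3/10) * a) = ln (3/10) + ln a" by (intro ln_mult_pos) (use a0 in auto)
      moreover have "ln a \<ge> ln s" using a_lo s0 by simp
      moreover have "ln s = - (l/2)" using ls s0 by (simp add: ln_div)
      moreover have "ln (3/10) \<ge> - (7/3::real)" using ln_ge_1_minus_inv[of "3/10"] by simp
      moreover have "ln (sa^2) = 2 * ln sa" using sa0 by (simp add: ln_realpow)
      ultimately show ?thesis by linarith
    qed
    have lnsa0: "- ln sa \<ge> 0" using sa sa0 by simp
    have "K sa = 5/2 * sa^2 + 5 * sa^2 * (- ln sa)" unfolding K_def by (simp add: algebra_simps)
    also have "\<dots> \<le> 5/2 * (2*a) + 5 * (2*a) * (7/6 + l/4)"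
      using sa_hi lnsa lnsa0 a0 by (intro add_mono mult_left_mono mult_mono) auto
    also have "\<dots> = a * (50/3 + 5/2 * l)" by (simp add: algebra_simps)
    also have "\<dots> \<le> (4/3* s) * (50/3 + 5/2 * l)" using a_hi l1 by (intro mult_right_mono) auto
    also have "\<dots> \<le> 27 * s * l"
    proof -
      have "(4/3* s) * (50/3 + 5/2 * l) = s * (200/9 + 10/3 * l)" by (simp add: algebra_simps)
      also have "\<dots> \<le> s * (27 * l)" using l1 s0 by (intro mult_left_mono) auto
      finally show ?thesis by simp
    qed
    finally show ?thesis using bound_bot[OF sa0 sa(2)] by simp
  qed
  have qsl: "6 * q \<le> 6 * s * l"
  proof -
    have "q \<le> s" unfolding qs using s0 s1 by (simp add: power2_eq_square)
    also have "s \<le> s * l" using s0 l1 by simp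
    finally show ?thesis by simp
  qed
  have "integral {a..b} g \<ge> pi^2/18 - 33 * s * l"
    using int top bot P_diff qsl by simp
  moreover have "0 \<le> s * l" using s0 l1 by simp
  ultimately have "integral {a..b} g \<ge> pi^2/18 - 40 * s * l" by simp
  then show ?thesis unfolding a_def b_def s_def l_def .
qed


theorem lemma9:
  shows "\<exists>C1::real. \<forall>p::real. 0 < p \<and> p < 0.1 \<longrightarrow>
    (let q = - ln (1 - p);
         A = \<lceil>1 / sqrt q\<rceil>;
         B = \<lfloor>(1 / q) * ln (1 / q)\<rfloor>
     in integral {of_int A * q .. of_int B * q} g \<ge> pi\<^sup>2 / 18 - C1 * sqrt q * ln (1 / q))"
proof (intro exI[of _ 40] allI impI)
  fix p :: real assume p: "0 < p \<and> p < 0.1"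
  define q where "q = - ln (1 - p)"
  have q0: "0 < q" unfolding q_def using p by simp
  have "ln (1 - p) \<ge> 1 - 1/(1-p)" using p by (intro ln_ge_1_minus_inv) auto
  moreover have "1 - 1/(1-p) > - (1/9)" using p by (simp add: field_simps)
  ultimately have q1: "q < 1/9" unfolding q_def by linarith
  show "let q = - ln (1 - p);
         A = \<lceil>1 / sqrt q\<rceil>;
         B = \<lfloor>(1 / q) * ln (1 / q)\<rfloor>
     in integral {of_int A * q .. of_int B * q} g \<ge> pi\<^sup>2 / 18 - 40 * sqrt q * ln (1 / q)"
    unfolding Let_def q_def[symmetric] using main[OF q0 q1] by simp
qed

end
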